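(* Let $N\ge 2$ and $x=(x_1,\dots,x_{2N})\in(\mathbb{R}_{>0})^{2N}$. Put $H_0(x)=0$ and, for $1\le k\le N$, $$H_k(x)=\min_{\substack{1\le i_1\triangleleft i_2\triangleleft\cdots\triangleleft i_k\le 2N\\ (i_1,i_k)\neq(1,2N)}}\big(x_{i_1}+x_{i_2}+\cdots+x_{i_k}\big).$$ Then $H_k(x)+H_{k+2}(x)\ge 2H_{k+1}(x)$ for all $0\le k\le N-2$.
   Context: For integers $i,j$, $i\triangleleft j$ means $i+1<j$. The minimum runs over index tuples $1\le i_1<\dots<i_k\le 2N$ with consecutive indices differing by at least $2$, excluding tuples with $i_1=1$ and $i_k=2N$ simultaneously. *)

theory Defs
  imports Complex_Main
begin

definition tri :: "nat \<Rightarrow> nat \<Rightarrow> bool" where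
  "tri i j \<longleftrightarrow> i + 1 < j"

definition admissible :: "nat \<Rightarrow> nat \<Rightarrow> nat list \<Rightarrow> bool" where
  "admissible N k is \<longleftrightarrow>
     length is = k \<and> k \<ge> 1 \<and>
     (\<forall>j<k. 1 \<le> is ! j \<and> is ! j \<le> 2 * N) \<and>
     (\<forall>j. j + 1 < k \<longrightarrow> tri (is ! j) (is ! (j + 1))) \<and>
     (is ! 0, is ! (k - 1)) \<noteq> (1, 2 * N)"

definition H :: "nat \<Rightarrow> (nat \<Rightarrow> real) \<Rightarrow> nat \<Rightarrow> real" where
  "H N x k = (if k = 0 then 0
              else Min {(\<Sum>j<k. x (is ! j)) | is. admissible N k is})"

end

theory Submission
  imports Defs
begin


definition indep :: "nat \<Rightarrow> nat set \<Rightarrow> bool" where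
  "indep N S \<longleftrightarrow> S \<subseteq> {1..2*N} \<and> (\<forall>i\<in>S. Suc i \<notin> S) \<and> \<not>(1 \<in> S \<and> 2*N \<in> S)"

definition cu :: "nat \<Rightarrow> nat \<Rightarrow> nat" where
  "cu N c = (if c = 0 \<or> c = 2*N then 2*N else c)"
definition cv :: "nat \<Rightarrow> nat \<Rightarrow> nat" where
  "cv N c = (if c = 0 \<or> c = 2*N then 1 else Suc c)"
definition safe :: "nat \<Rightarrow> nat set \<Rightarrow> nat set \<Rightarrow> nat \<Rightarrow> bool" where
  "safe N A B c \<longleftrightarrow> \<not>(cu N c \<in> A \<and> cv N c \<in> B) \<and> \<not>(cu N c \<in> B \<and> cv N c \<in> A)"
definition ee :: "nat set \<Rightarrow> nat set \<Rightarrow> nat \<Rightarrow> int" where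
  "ee A B i = (if i \<in> B then 1 else 0) - (if i \<in> A then 1 else 0)"
definition gg :: "nat set \<Rightarrow> nat set \<Rightarrow> nat \<Rightarrow> int" where
  "gg A B t = (\<Sum>i\<in>{1..t}. ee A B i)"

lemma gg_Suc: "gg A B (Suc t) = gg A B t + ee A B (Suc t)"
  by (simp add: gg_def)
lemma gg_0: "gg A B 0 = 0" by (simp add: gg_def)
lemma ee_bound: "ee A B i \<le> 1" "ee A B i \<ge> -1"
  by (auto simp: ee_def)

lemma safe_sym: "safe N A B c = safe N B A c" by (auto simp: safe_def)

lemma unsafe_step:
  assumes "indep N A" "indep N B" "0 < c" "c < 2*N" "\<not> safe N A B c"
  shows "ee A B (Suc c) = - ee A B c"
  using assms unfolding indep_def safe_def cu_def cv_def ee_def by auto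

lemma run:
  assumes "indep N A" "indep N B"
    and "\<forall>c. s < c \<and> c < s+1+d \<longrightarrow> \<not> safe N A B c" "s+1+d \<le> 2*N"
  shows "2*(gg A B (s+1+d) - gg A B s) = ee A B (s+1) + ee A B (s+1+d)"
  using assms(3,4)
proof (induction d)
  case 0
  then show ?case by (simp add: gg_Suc)
next
  case (Suc d)
  have IH: "2*(gg A B (s+1+d) - gg A B s) = ee A B (s+1) + ee A B (s+1+d)"
    using Suc by auto
  have "ee A B (Suc (s+1+d)) = - ee A B (s+1+d)"
    using unsafe_step[OF assms(1,2), of "s+1+d"] Suc.prems by auto
  then show ?case using IH by (simp add: gg_Suc)
qed

lemma ivt:
  fixes P :: "nat \<Rightarrow> bool" and f :: "nat \<Rightarrow> int"
  assumes "P s" "P u" "s \<le> u" "f u \<ge> f s + 1"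
    and step: "\<And>a b. a < b \<Longrightarrow> b \<le> u \<Longrightarrow> P a \<Longrightarrow> P b \<Longrightarrow> (\<forall>c. a < c \<and> c < b \<longrightarrow> \<not> P c) \<Longrightarrow> f b \<le> f a + 1"
  shows "\<exists>t. s < t \<and> t \<le> u \<and> P t \<and> f t = f s + 1"
proof -
  define S0 where "S0 = {c. s \<le> c \<and> c \<le> u \<and> P c \<and> f c \<le> f s}"
  have fS0: "finite S0" unfolding S0_def by (rule finite_subset[of _ "{..u}"]) auto
  have "s \<in> S0" using assms unfolding S0_def by auto
  define t0 where "t0 = Max S0"
  have t0: "t0 \<in> S0" using Max_in[OF fS0] \<open>s \<in> S0\<close> t0_def by auto
  have t0max: "\<And>c. c \<in> S0 \<Longrightarrow> c \<le> t0" using Max_ge[OF fS0] t0_def by auto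
  have "t0 \<noteq> u" using t0 assms(4) unfolding S0_def by auto
  hence "t0 < u" using t0 unfolding S0_def by auto
  define S1 where "S1 = {c. t0 < c \<and> c \<le> u \<and> P c}"
  have fS1: "finite S1" unfolding S1_def by (rule finite_subset[of _ "{..u}"]) auto
  have "u \<in> S1" using \<open>t0 < u\<close> assms unfolding S1_def by auto
  define t1 where "t1 = Min S1"
  have t1: "t1 \<in> S1" using Min_in[OF fS1] \<open>u \<in> S1\<close> t1_def by auto
  have t1min: "\<And>c. c \<in> S1 \<Longrightarrow> t1 \<le> c" using Min_le[OF fS1] t1_def by auto
  have nb: "\<forall>c. t0 < c \<and> c < t1 \<longrightarrow> \<not> P c"
    using t1min t1 unfolding S1_def by fastforce
  have "f t1 \<le> f t0 + 1" using step[of t0 t1] t0 t1 nb unfolding S0_def S1_def by auto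
  moreover have "\<not> f t1 \<le> f s"
  proof
    assume "f t1 \<le> f s"
    hence "t1 \<in> S0" using t1 t0 unfolding S0_def S1_def by auto
    thus False using t0max t1 unfolding S1_def by fastforce
  qed
  ultimately show ?thesis using t0 t1 unfolding S0_def S1_def
    by (intro exI[of _ t1]) auto
qed



lemma ind_sum: "finite I \<Longrightarrow> (\<Sum>i\<in>I. (if i \<in> B then 1 else 0) :: int) = int (card (B \<inter> I))"
  by (simp add: sum.If_cases Int_commute Int_def)

lemma ee_sum: "finite I \<Longrightarrow> sum (ee A B) I = int (card (B \<inter> I)) - int (card (A \<inter> I))"
  unfolding ee_def by (simp add: sum_subtractf ind_sum)

lemma gg_diff: "gg A B (s + d) - gg A B s = sum (ee A B) {Suc s..s+d}"
  by (induction d) (auto simp: gg_Suc)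

lemma gg_2N: "indep N A \<Longrightarrow> indep N B \<Longrightarrow> gg A B (2*N) = int (card B) - int (card A)"
  unfolding gg_def indep_def
  by (simp add: ee_sum Int_absorb2)

lemma swap_indep:
  assumes A: "indep N A" and B: "indep N B" and ss: "safe N A B s" and st: "safe N A B t"
    and "s < t" "t \<le> 2*N"
  shows "indep N ((A - {Suc s..t}) \<union> (B \<inter> {Suc s..t}))" (is "indep N ?C")
proof -
  have As: "A \<subseteq> {1..2*N}" "\<And>i. i \<in> A \<Longrightarrow> Suc i \<notin> A" "\<not>(1 \<in> A \<and> 2*N \<in> A)"
    using A unfolding indep_def by auto
  have Bs: "B \<subseteq> {1..2*N}" "\<And>i. i \<in> B \<Longrightarrow> Suc i \<notin> B" "\<not>(1 \<in> B \<and> 2*N \<in> B)"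
    using B unfolding indep_def by auto
  have s1: "s \<noteq> 0 \<Longrightarrow> \<not>(s \<in> A \<and> Suc s \<in> B) \<and> \<not>(s \<in> B \<and> Suc s \<in> A)"
    using ss \<open>s < t\<close> \<open>t \<le> 2*N\<close> unfolding safe_def cu_def cv_def by auto
  have s0: "s = 0 \<Longrightarrow> \<not>(2*N \<in> A \<and> 1 \<in> B) \<and> \<not>(2*N \<in> B \<and> 1 \<in> A)"
    using ss unfolding safe_def cu_def cv_def by auto
  have t1: "t \<noteq> 2*N \<Longrightarrow> \<not>(t \<in> A \<and> Suc t \<in> B) \<and> \<not>(t \<in> B \<and> Suc t \<in> A)"
    using st \<open>s < t\<close> unfolding safe_def cu_def cv_def by auto
  have t0: "t = 2*N \<Longrightarrow> \<not>(2*N \<in> A \<and> 1 \<in> B) \<and> \<not>(2*N \<in> B \<and> 1 \<in> A)"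
    using st unfolding safe_def cu_def cv_def by auto
  have "?C \<subseteq> {1..2*N}" using As Bs by blast
  moreover have "\<forall>i\<in>?C. Suc i \<notin> ?C"
  proof
    fix i assume i: "i \<in> ?C"
    show "Suc i \<notin> ?C"
    proof
      assume si: "Suc i \<in> ?C"
      show False
      proof (cases "i \<in> {Suc s..t}")
        case True
        hence "i \<in> B" using i by blast
        show False
        proof (cases "Suc i \<in> {Suc s..t}")
          case True thus False using si \<open>i \<in> B\<close> Bs(2) by blast
        next
          case False
          hence "i = t" "Suc i \<in> A" using \<open>i \<in> {Suc s..t}\<close> si by auto
          moreover have "t \<noteq> 2*N" using \<open>Suc i \<in> A\<close> As(1) \<open>i = t\<close> by auto
          ultimately show False using t1 \<open>i \<in> B\<close> by auto
        qed
      next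
        case False
        hence "i \<in> A" using i by blast
        show False
        proof (cases "Suc i \<in> {Suc s..t}")
          case False thus False using si \<open>i \<in> A\<close> As(2) by blast
        next
          case True
          hence "i = s" "Suc i \<in> B" using \<open>i \<notin> {Suc s..t}\<close> si by auto
          moreover have "s \<noteq> 0" using \<open>i \<in> A\<close> As(1) \<open>i = s\<close> by auto
          ultimately show False using s1 \<open>i \<in> A\<close> by auto
        qed
      qed
    qed
  qed
  moreover have "\<not>(1 \<in> ?C \<and> 2*N \<in> ?C)"
  proof
    assume h: "1 \<in> ?C \<and> 2*N \<in> ?C"
    show False
    proof (cases "1 \<in> {Suc s..t}")
      case True
      hence "s = 0" "1 \<in> B" using h by auto
      thus False using s0 h As(3) Bs(3) by auto
    next
      case False
      hence "s \<noteq> 0" "1 \<in> A" using h \<open>s < t\<close> by auto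
      thus False using t0 h As(3) Bs(3) \<open>t \<le> 2*N\<close> \<open>s<t\<close> by (cases "t = 2*N") auto
    qed
  qed
  ultimately show ?thesis unfolding indep_def by blast
qed



lemma step_bound:
  assumes "indep N A" "indep N B" "a < b" "b \<le> 2*N" "\<forall>c. a < c \<and> c < b \<longrightarrow> \<not> safe N A B c"
  shows "gg A B b \<le> gg A B a + 1"
proof -
  have e: "a + 1 + (b - a - 1) = b" using assms by auto
  have "2*(gg A B (a+1+(b-a-1)) - gg A B a) = ee A B (a+1) + ee A B (a+1+(b-a-1))"
    by (rule run[OF assms(1,2)]) (use assms e in auto)
  thus ?thesis using ee_bound[of A B "a+1"] ee_bound[of A B b] e by simp
qed

lemma cuts_exist:
  assumes A: "indep N A" and B: "indep N B" and cA: "card A = k" and cB: "card B = k + 2"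
    and kN: "k + 2 \<le> N"
  shows "\<exists>s t. s < t \<and> t \<le> 2*N \<and> safe N A B s \<and> safe N A B t \<and> gg A B t = gg A B s + 1"
proof -
  have As: "A \<subseteq> {1..2*N}" "\<And>i. i \<in> A \<Longrightarrow> Suc i \<notin> A" "\<not>(1 \<in> A \<and> 2*N \<in> A)"
    using A unfolding indep_def by auto
  have Bs: "B \<subseteq> {1..2*N}" "\<And>i. i \<in> B \<Longrightarrow> Suc i \<notin> B" "\<not>(1 \<in> B \<and> 2*N \<in> B)"
    using B unfolding indep_def by auto
  have g2N: "gg A B (2*N) = gg A B 0 + 2" using gg_2N[OF A B] cA cB gg_0 by simp
  have stepb: "\<And>a b. a < b \<Longrightarrow> b \<le> 2*N \<Longrightarrow> safe N A B a \<Longrightarrow> safe N A B b \<Longrightarrow>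
       (\<forall>c. a < c \<and> c < b \<longrightarrow> \<not> safe N A B c) \<Longrightarrow> gg A B b \<le> gg A B a + 1"
    using step_bound[OF A B] by blast
  have s02: "safe N A B (2*N) = safe N A B 0" unfolding safe_def cu_def cv_def by simp
  show ?thesis
  proof (cases "safe N A B 0")
    case True
    have "\<exists>t. 0 < t \<and> t \<le> 2*N \<and> safe N A B t \<and> gg A B t = gg A B 0 + 1"
    proof (rule ivt[of "safe N A B"])
      show "safe N A B 0" "safe N A B (2*N)" using True s02 by auto
      show "0 \<le> 2*N" by simp
      show "gg A B 0 + 1 \<le> gg A B (2*N)" using g2N by simp
      fix a b assume "a < b" "b \<le> 2*N" "safe N A B a" "safe N A B b" "\<forall>c. a < c \<and> c < b \<longrightarrow> \<not> safe N A B c"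
      thus "gg A B b \<le> gg A B a + 1" using stepb by blast
    qed
    then show ?thesis using True by blast
  next
    case False
    have "card (A \<union> B) \<le> 2*k+2" using card_Un_le[of A B] cA cB by simp
    moreover have "card {1..2*N} = 2*N" by simp
    moreover have "finite (A \<union> B)" using As(1) Bs(1) finite_subset by blast
    ultimately have "\<not> {1..2*N} \<subseteq> A \<union> B"
    proof (intro notI)
      assume "{1..2*N} \<subseteq> A \<union> B"
      hence "card {1..2*N} \<le> card (A \<union> B)" by (rule card_mono[OF \<open>finite (A \<union> B)\<close>])
      thus False using \<open>card (A \<union> B) \<le> 2*k+2\<close> kN by simp
    qed
    then obtain p where p: "p \<in> {1..2*N}" "p \<notin> A" "p \<notin> B" by blast
    define SC where "SC = {c. c \<le> 2*N \<and> safe N A B c}"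
    have fSC: "finite SC" unfolding SC_def by (rule finite_subset[of _ "{..2*N}"]) auto
    have "SC \<noteq> {}"
    proof (cases "p = 2*N")
      case True
      have c: "cu N (2*N-1) = 2*N-1" "cv N (2*N-1) = 2*N" using kN by (auto simp: cu_def cv_def)
      have "safe N A B (2*N-1)" unfolding safe_def c using p True by simp
      hence "2*N - 1 \<in> SC" unfolding SC_def by simp
      thus ?thesis by blast
    next
      case False
      have c: "cu N p = p" using p False by (auto simp: cu_def)
      have "safe N A B p" unfolding safe_def c using p by simp
      hence "p \<in> SC" using p unfolding SC_def by simp
      thus ?thesis by blast
    qed
    define smin where "smin = Min SC"
    define smax where "smax = Max SC"
    have smin: "smin \<in> SC" "\<And>c. c \<in> SC \<Longrightarrow> smin \<le> c"
      using Min_in[OF fSC \<open>SC \<noteq> {}\<close>] Min_le[OF fSC] smin_def by auto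
    have smax: "smax \<in> SC" "\<And>c. c \<in> SC \<Longrightarrow> c \<le> smax"
      using Max_in[OF fSC \<open>SC \<noteq> {}\<close>] Max_ge[OF fSC] smax_def by auto
    have smin0: "0 < smin" using smin False unfolding SC_def by (cases "smin = 0") auto
    have smaxN: "smax < 2*N" using smax False s02 unfolding SC_def by (cases "smax = 2*N") auto
    have "smin \<le> smax" using smin smax by auto
    have nb1: "\<forall>c. 0 < c \<and> c < 0+1+(smin-1) \<longrightarrow> \<not> safe N A B c"
    proof (intro allI impI)
      fix c assume c: "0 < c \<and> c < 0+1+(smin-1)"
      hence "c < smin" using smin0 by simp
      hence "c \<le> 2*N" using smaxN \<open>smin \<le> smax\<close> by simp
      thus "\<not> safe N A B c" using smin(2)[of c] \<open>c < smin\<close> unfolding SC_def by auto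
    qed
    have r1: "2*(gg A B (0+1+(smin-1)) - gg A B 0) = ee A B (0+1) + ee A B (0+1+(smin-1))"
      by (rule run[OF A B]) (use nb1 smin0 smaxN \<open>smin \<le> smax\<close> in auto)
    have nb2: "\<forall>c. smax < c \<and> c < smax+1+(2*N-smax-1) \<longrightarrow> \<not> safe N A B c"
    proof (intro allI impI)
      fix c assume c: "smax < c \<and> c < smax+1+(2*N-smax-1)"
      hence "c \<le> 2*N" using smaxN by simp
      thus "\<not> safe N A B c" using smax(2)[of c] c unfolding SC_def by auto
    qed
    have r2: "2*(gg A B (smax+1+(2*N-smax-1)) - gg A B smax) = ee A B (smax+1) + ee A B (smax+1+(2*N-smax-1))"
      by (rule run[OF A B]) (use nb2 smaxN in auto)
    have w: "ee A B 1 + ee A B (2*N) = 0"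
    proof -
      have wc: "(2*N \<in> A \<and> 1 \<in> B) \<or> (2*N \<in> B \<and> 1 \<in> A)"
        using False unfolding safe_def cu_def cv_def by simp
      thus ?thesis using As(3) Bs(3) kN by (auto simp: ee_def)
    qed
    have e1: "0+1+(smin-1) = smin" using smin0 by simp
    have e2: "smax+1+(2*N-smax-1) = 2*N" using smaxN by simp
    have gge: "gg A B smax \<ge> gg A B smin + 1"
    proof -
      have "2*(gg A B smin - 0) = ee A B 1 + ee A B smin" using r1 e1 by (simp add: gg_0)
      moreover have "2*(gg A B (2*N) - gg A B smax) = ee A B (smax+1) + ee A B (2*N)" using r2 e2 by simp
      ultimately show ?thesis using w g2N ee_bound[of A B "smax+1"] ee_bound[of A B smin] gg_0[of A B] by (simp add: algebra_simps)
    qed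
    have "\<exists>t. smin < t \<and> t \<le> smax \<and> safe N A B t \<and> gg A B t = gg A B smin + 1"
    proof (rule ivt[of "safe N A B"])
      show "safe N A B smin" "safe N A B smax" using smin(1) smax(1) unfolding SC_def by auto
      show "smin \<le> smax" by fact
      show "gg A B smin + 1 \<le> gg A B smax" by (rule gge)
      fix a b assume "a < b" "b \<le> smax" "safe N A B a" "safe N A B b" "\<forall>c. a < c \<and> c < b \<longrightarrow> \<not> safe N A B c"
      moreover have "b \<le> 2*N" using \<open>b \<le> smax\<close> smaxN by simp
      ultimately show "gg A B b \<le> gg A B a + 1" using stepb[of a b] by blast
    qed
    then obtain t where "smin < t" "t \<le> smax" "safe N A B t" "gg A B t = gg A B smin + 1" by blast
    moreover have "safe N A B smin" using smin(1) unfolding SC_def by auto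
    ultimately show ?thesis using smaxN by (intro exI[of _ smin] exI[of _ t]) auto
  qed
qed



lemma exchange:
  fixes x :: "nat \<Rightarrow> real"
  assumes A: "indep N A" and B: "indep N B" and cA: "card A = k" and cB: "card B = k + 2"
    and kN: "k + 2 \<le> N"
  shows "\<exists>C D. indep N C \<and> indep N D \<and> card C = k+1 \<and> card D = k+1 \<and>
           sum x C + sum x D = sum x A + sum x B"
proof -
  obtain s t where st: "s < t" "t \<le> 2*N" "safe N A B s" "safe N A B t" "gg A B t = gg A B s + 1"
    using cuts_exist[OF A B cA cB kN] by blast
  define I where "I = {Suc s..t}"
  have fA: "finite A" and fB: "finite B" using A B finite_subset unfolding indep_def by blast+
  have fI: "finite I" unfolding I_def by simp
  have "gg A B (s + (t-s)) - gg A B s = sum (ee A B) {Suc s..s+(t-s)}" by (rule gg_diff)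
  hence "gg A B t - gg A B s = sum (ee A B) I" using st unfolding I_def by simp
  hence cc: "int (card (B \<inter> I)) = int (card (A \<inter> I)) + 1" using st ee_sum[OF fI, of A B] by simp
  define C where "C = (A - I) \<union> (B \<inter> I)"
  define D where "D = (B - I) \<union> (A \<inter> I)"
  have iC: "indep N C" unfolding C_def I_def by (rule swap_indep[OF A B st(3,4,1,2)])
  have iD: "indep N D" unfolding D_def I_def
    by (rule swap_indep[OF B A]) (use st safe_sym in auto)
  have cA2: "card A = card (A \<inter> I) + card (A - I)" using card_Int_Diff[OF fA] .
  have cB2: "card B = card (B \<inter> I) + card (B - I)" using card_Int_Diff[OF fB] .
  have "card C = card (A - I) + card (B \<inter> I)" unfolding C_def
    by (rule card_Un_disjoint) (use fA fB in auto)
  hence c1: "card C = k + 1" using cA2 cc cA by simp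
  have "card D = card (B - I) + card (A \<inter> I)" unfolding D_def
    by (rule card_Un_disjoint) (use fA fB in auto)
  hence c2: "card D = k + 1" using cB2 cc cB by simp
  have "sum x C = sum x (A - I) + sum x (B \<inter> I)" unfolding C_def
    by (rule sum.union_disjoint) (use fA fB in auto)
  moreover have "sum x D = sum x (B - I) + sum x (A \<inter> I)" unfolding D_def
    by (rule sum.union_disjoint) (use fA fB in auto)
  moreover have "sum x A = sum x (A \<inter> I) + sum x (A - I)" by (rule sum.Int_Diff[OF fA])
  moreover have "sum x B = sum x (B \<inter> I) + sum x (B - I)" by (rule sum.Int_Diff[OF fB])
  ultimately have "sum x C + sum x D = sum x A + sum x B" by linarith
  thus ?thesis using iC iD c1 c2 by blast
qed

lemma adm_to_set:
  assumes adm: "admissible N k is"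
  shows "indep N (set is) \<and> card (set is) = k \<and> (\<Sum>j<k. x (is ! j)) = sum x (set is)"
proof -
  have len: "length is = k" and k1: "k \<ge> 1" and rng: "\<And>j. j < k \<Longrightarrow> 1 \<le> is ! j \<and> is ! j \<le> 2*N"
    and stp: "\<And>j. j + 1 < k \<Longrightarrow> is ! j + 1 < is ! (j+1)"
    and en: "(is ! 0, is ! (k - 1)) \<noteq> (1, 2 * N)"
    using adm unfolding admissible_def tri_def by auto
  have mono: "a < b \<Longrightarrow> b < k \<Longrightarrow> is ! a + 1 < is ! b" for a b
  proof (induction b)
    case 0 then show ?case by simp
  next
    case (Suc b)
    show ?case
    proof (cases "a = b")
      case True then show ?thesis using stp[of b] Suc.prems by simp
    next
      case False
      hence "is ! a + 1 < is ! b" using Suc by simp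
      moreover have "is ! b + 1 < is ! Suc b" using stp[of b] Suc.prems by simp
      ultimately show ?thesis by simp
    qed
  qed
  have dist: "distinct is"
    unfolding distinct_conv_nth len
  proof (intro allI impI)
    fix i j assume "i < k" "j < k" "i \<noteq> j"
    thus "is ! i \<noteq> is ! j" using mono[of i j] mono[of j i] by (cases "i < j") auto
  qed
  have card: "card (set is) = k" using distinct_card[OF dist] len by simp
  have sum: "(\<Sum>j<k. x (is ! j)) = sum x (set is)"
  proof -
    have "(\<Sum>j<k. x (is ! j)) = sum_list (map x is)"
      by (simp add: sum_list_sum_nth len atLeast0LessThan)
    also have "\<dots> = sum x (set is)" by (rule sum_list_distinct_conv_sum_set[OF dist])
    finally show ?thesis .
  qed
  have sub: "set is \<subseteq> {1..2*N}" using rng len by (auto simp: in_set_conv_nth)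
  have nsuc: "\<forall>i\<in>set is. Suc i \<notin> set is"
  proof (intro ballI notI)
    fix i assume "i \<in> set is" "Suc i \<in> set is"
    then obtain a b where ab: "a < k" "b < k" "is ! a = i" "is ! b = Suc i"
      using len by (auto simp: in_set_conv_nth)
    show False
    proof (cases "a < b")
      case True thus False using mono[of a b] ab by simp
    next
      case False
      hence "b < a \<or> a = b" by auto
      thus False using mono[of b a] ab by auto
    qed
  qed
  have nwrap: "\<not> (1 \<in> set is \<and> 2*N \<in> set is)"
  proof
    assume h: "1 \<in> set is \<and> 2*N \<in> set is"
    then obtain a b where ab: "a < k" "b < k" "is ! a = 1" "is ! b = 2*N"
      using len by (auto simp: in_set_conv_nth)
    have "is ! 0 \<le> is ! a"
    proof (cases "a = 0")
      case False thus ?thesis using mono[of 0 a] ab by simp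
    qed simp
    hence f: "is ! 0 = 1" using rng[of 0] k1 ab by simp
    have "is ! b \<le> is ! (k-1)"
    proof (cases "b = k-1")
      case False
      hence "b < k-1" using ab by simp
      thus ?thesis using mono[of b "k-1"] k1 by simp
    qed simp
    hence "is ! (k-1) = 2*N" using rng[of "k-1"] k1 ab by simp
    thus False using f en by simp
  qed
  show ?thesis using sub nsuc nwrap card sum unfolding indep_def by blast
qed

lemma set_to_adm:
  assumes i: "indep N S" and c: "card S = k" and k1: "k \<ge> 1"
  shows "admissible N k (sorted_list_of_set S) \<and>
         (\<Sum>j<k. x (sorted_list_of_set S ! j)) = sum x S"
proof -
  define L where "L = sorted_list_of_set S"
  have fS: "finite S" using i finite_subset unfolding indep_def by blast
  have len: "length L = k" using c fS unfolding L_def by simp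
  have set: "set L = S" using fS unfolding L_def by simp
  have srt: "sorted_wrt (<) L" unfolding L_def by (rule strict_sorted_list_of_set)
  have dist: "distinct L" unfolding L_def by simp
  have mem: "\<And>j. j < k \<Longrightarrow> L ! j \<in> S" using set len nth_mem by blast
  have rng: "\<forall>j<k. 1 \<le> L ! j \<and> L ! j \<le> 2*N"
  proof (intro allI impI)
    fix j assume "j < k" hence "L ! j \<in> S" by (rule mem)
    thus "1 \<le> L ! j \<and> L ! j \<le> 2*N" using i unfolding indep_def by auto
  qed
  have trs: "\<forall>j. j + 1 < k \<longrightarrow> tri (L ! j) (L ! (j+1))"
  proof (intro allI impI)
    fix j assume j: "j + 1 < k"
    have "L ! j < L ! (j+1)" using srt j len by (simp add: sorted_wrt_iff_nth_less)
    moreover have "Suc (L ! j) \<noteq> L ! (j+1)" using mem[of j] mem[of "j+1"] j i unfolding indep_def by auto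
    ultimately show "tri (L ! j) (L ! (j+1))" unfolding tri_def by simp
  qed
  have en: "(L ! 0, L ! (k - 1)) \<noteq> (1, 2 * N)"
    using mem[of 0] mem[of "k-1"] k1 i unfolding indep_def by auto
  have sum: "(\<Sum>j<k. x (L ! j)) = sum x S"
  proof -
    have "(\<Sum>j<k. x (L ! j)) = sum_list (map x L)"
      by (simp add: sum_list_sum_nth len atLeast0LessThan)
    also have "\<dots> = sum x S" using sum_list_distinct_conv_sum_set[OF dist] set by simp
    finally show ?thesis .
  qed
  show ?thesis using len k1 rng trs en sum unfolding admissible_def L_def by blast
qed

definition Hs :: "nat \<Rightarrow> (nat \<Rightarrow> real) \<Rightarrow> nat \<Rightarrow> real" where
  "Hs N x k = Min ((\<lambda>S. sum x S) ` {S. indep N S \<and> card S = k})"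

lemma H_Hs: "H N x k = Hs N x k"
proof (cases "k = 0")
  case True
  have "{S. indep N S \<and> card S = 0} = {{}}"
  proof
    show "{S. indep N S \<and> card S = 0} \<subseteq> {{}}"
      using finite_subset unfolding indep_def by fastforce
    show "{{}} \<subseteq> {S. indep N S \<and> card S = 0}" unfolding indep_def by auto
  qed
  then show ?thesis using True unfolding H_def Hs_def by simp
next
  case False
  have "{(\<Sum>j<k. x (is ! j)) | is. admissible N k is} = (\<lambda>S. sum x S) ` {S. indep N S \<and> card S = k}"
  proof
    show "{(\<Sum>j<k. x (is ! j)) | is. admissible N k is} \<subseteq> (\<lambda>S. sum x S) ` {S. indep N S \<and> card S = k}"
      using adm_to_set by fastforce
  next
    show "(\<lambda>S. sum x S) ` {S. indep N S \<and> card S = k} \<subseteq> {(\<Sum>j<k. x (is ! j)) | is. admissible N k is}"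
    proof
      fix v assume "v \<in> (\<lambda>S. sum x S) ` {S. indep N S \<and> card S = k}"
      then obtain S where S: "indep N S" "card S = k" "v = sum x S" by blast
      have "admissible N k (sorted_list_of_set S) \<and> (\<Sum>j<k. x (sorted_list_of_set S ! j)) = sum x S"
        using set_to_adm[OF S(1,2)] False by simp
      thus "v \<in> {(\<Sum>j<k. x (is ! j)) | is. admissible N k is}" using S(3) by force
    qed
  qed
  then show ?thesis using False unfolding H_def Hs_def by simp
qed

lemma fin_indep: "finite ((\<lambda>S. sum x S) ` {S. indep N S \<and> card S = k})"
proof -
  have "{S. indep N S \<and> card S = k} \<subseteq> Pow {1..2*N}" unfolding indep_def by auto
  hence "finite {S. indep N S \<and> card S = k}" by (rule finite_subset) simp
  thus ?thesis by simp
qed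

lemma ex_indep:
  assumes "k \<le> N"
  shows "\<exists>S. indep N S \<and> card S = k"
proof -
  define S where "S = (\<lambda>i. 2*i+1) ` {..<k}"
  have "inj_on (\<lambda>i::nat. 2*i+1) {..<k}" by (auto simp: inj_on_def)
  hence "card S = k" unfolding S_def by (simp add: card_image)
  moreover have "indep N S" unfolding indep_def S_def using assms by auto presburger+
  ultimately show ?thesis by blast
qed


lemma Hs_attained:
  assumes "k \<le> N"
  shows "\<exists>S. indep N S \<and> card S = k \<and> Hs N x k = sum x S"
proof -
  have ne: "(\<lambda>S. sum x S) ` {S. indep N S \<and> card S = k} \<noteq> {}" using ex_indep[OF assms] by blast
  have "Hs N x k \<in> (\<lambda>S. sum x S) ` {S. indep N S \<and> card S = k}"
    unfolding Hs_def by (rule Min_in[OF fin_indep ne])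
  thus ?thesis by auto
qed

lemma Hs_le: "indep N S \<Longrightarrow> card S = k \<Longrightarrow> Hs N x k \<le> sum x S"
  unfolding Hs_def by (rule Min_le[OF fin_indep]) auto

theorem mainTheorem5:
  fixes N :: nat and x :: "nat \<Rightarrow> real" and k :: nat
  assumes "N \<ge> 2"
    and "\<forall>i\<in>{1..2*N}. x i > 0"
    and "k \<le> N - 2"
  shows "H N x k + H N x (k + 2) \<ge> 2 * H N x (k + 1)"
proof -
  have kN: "k + 2 \<le> N" using assms(1,3) by simp
  obtain A where A: "indep N A" "card A = k" "Hs N x k = sum x A"
    using Hs_attained[of k N x] kN by auto
  obtain B where B: "indep N B" "card B = k + 2" "Hs N x (k+2) = sum x B"
    using Hs_attained[of "k+2" N x] kN by auto
  obtain C D where CD: "indep N C" "indep N D" "card C = k+1" "card D = k+1"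
      "sum x C + sum x D = sum x A + sum x B"
    using exchange[OF A(1) B(1) A(2) B(2) kN, of x] by blast
  have "Hs N x (k+1) \<le> sum x C" by (rule Hs_le[OF CD(1,3)])
  moreover have "Hs N x (k+1) \<le> sum x D" by (rule Hs_le[OF CD(2,4)])
  ultimately show ?thesis using A(3) B(3) CD(5) unfolding H_Hs by linarith
qed

end
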